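(* Let $w\in W^{2,2}(S^1)$ with $w\geq 1$ and $\int_{S^1}(w^2-w'^2)\,dt=0$. Then there exists a family $(w_\varepsilon)_{\varepsilon>0}\subset W^{2,\infty}(S^1)$ such that $w_\varepsilon\geq 1$ and $\int_{S^1}(w_\varepsilon^2-w_\varepsilon'^2)\,dt=0$ for all $\varepsilon$, and $w_\varepsilon\to w$ in $W^{2,2}(S^1)$ as $\varepsilon\to 0$.
   Context: $S^1=\mathbb{R}/(2\pi\mathbb{Z})$; functions on $S^1$ are identified with $2\pi$-periodic functions on $\mathbb{R}$, and $W^{k,p}(S^1)$ consists of $2\pi$-periodic functions in $W^{k,p}_{loc}(\mathbb{R})$, normed by the $W^{k,p}$ norm on $[-\pi,\pi)$. *)

theory Defs
  imports "HOL-Analysis.Analysis"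
begin

text \<open>Functions on S^1 = 2pi-periodic functions on the reals.\<close>
definition periodic_2pi :: "(real \<Rightarrow> real) \<Rightarrow> bool" where
  "periodic_2pi f \<longleftrightarrow> (\<forall>x. f (x + 2*pi) = f x)"

text \<open>g is a weak (L^1_loc) derivative of f, with f its absolutely continuous
  representative: f b - f a = integral of g over [a,b] for all a <= b.\<close>
definition weak_deriv :: "(real \<Rightarrow> real) \<Rightarrow> (real \<Rightarrow> real) \<Rightarrow> bool" where
  "weak_deriv f g \<longleftrightarrow>
     (\<forall>a b. a \<le> b \<longrightarrow> g absolutely_integrable_on {a..b} \<and> (g has_integral (f b - f a)) {a..b})"

text \<open>W^{2,2}(S^1) (continuous representative): periodic w with periodic weak derivatives
  w1, w2, and w2 square integrable over a period.\<close>
definition W22_S1 :: "(real \<Rightarrow> real) \<Rightarrow> bool" where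
  "W22_S1 w \<longleftrightarrow> periodic_2pi w \<and>
     (\<exists>w1 w2. periodic_2pi w1 \<and> periodic_2pi w2 \<and> weak_deriv w w1 \<and> weak_deriv w1 w2 \<and>
        (\<lambda>x. (w2 x)\<^sup>2) integrable_on {-pi..pi})"

text \<open>W^{2,\<infinity>}(S^1): second weak derivative bounded (a representative may be chosen
  bounded everywhere, as it is only determined a.e.).\<close>
definition W2inf_S1 :: "(real \<Rightarrow> real) \<Rightarrow> bool" where
  "W2inf_S1 w \<longleftrightarrow> periodic_2pi w \<and>
     (\<exists>w1 w2. periodic_2pi w1 \<and> periodic_2pi w2 \<and> weak_deriv w w1 \<and> weak_deriv w1 w2 \<and>
        (\<exists>C. \<forall>x. \<bar>w2 x\<bar> \<le> C))"

text \<open>Second weak derivative (some representative; determined up to null sets).\<close>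
definition wderiv2 :: "(real \<Rightarrow> real) \<Rightarrow> real \<Rightarrow> real" where
  "wderiv2 f = (SOME g. weak_deriv (deriv f) g)"

definition W22_norm :: "(real \<Rightarrow> real) \<Rightarrow> real" where
  "W22_norm f = sqrt (integral {-pi..pi} (\<lambda>x. (f x)\<^sup>2 + (deriv f x)\<^sup>2 + (wderiv2 f x)\<^sup>2))"

end

theory Submission
  imports Defs
begin

definition prim :: "(real \<Rightarrow> real) \<Rightarrow> real \<Rightarrow> real" where
  "prim f t = (if 0 \<le> t then integral {0..t} f else - integral {t..0} f)"

lemma prim_has_integral:
  assumes li: "\<And>a b. f integrable_on {a..b}" and ab: "a \<le> b"
  shows "(f has_integral (prim f b - prim f a)) {a..b}"
proof -
  have eq: "integral {a..b} f = prim f b - prim f a"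
  proof (cases "0 \<le> a")
    case True
    then show ?thesis using Henstock_Kurzweil_Integration.integral_combine[OF _ ab li, of 0] ab by (simp add: prim_def)
  next
    case False
    show ?thesis
    proof (cases "b \<le> 0")
      case True
      then show ?thesis using Henstock_Kurzweil_Integration.integral_combine[OF ab _ li, of 0] ab False
        by (simp add: prim_def)
    next
      case False2: False
      then show ?thesis using Henstock_Kurzweil_Integration.integral_combine[of a 0 b f] li False by (simp add: prim_def)
    qed
  qed
  show ?thesis using integrable_integral[OF li[of a b]] unfolding eq .
qed

lemma intrep_continuous:
  fixes f F :: "real \<Rightarrow> real"
  assumes F: "\<And>a b. a \<le> b \<Longrightarrow> (f has_integral (F b - F a)) {a..b}"
  shows "isCont F x"
proof -
  have eq: "F y = F (x-1) + integral {x-1..y} f" if "y \<in> {x-1..x+1}" for y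
    using F[of "x-1" y] that by (auto dest: integral_unique)
  have "f integrable_on {x-1..x+1}" using F[of "x-1" "x+1"] by auto
  then have "continuous_on {x-1..x+1} (\<lambda>y. F (x-1) + integral {x-1..y} f)"
    by (intro continuous_intros indefinite_integral_continuous_1)
  then have "continuous_on {x-1..x+1} F"
    using continuous_on_cong eq by (metis (no_types, lifting))
  then show ?thesis
    by (rule continuous_on_interior) simp
qed

lemma intrep_deriv:
  fixes f F :: "real \<Rightarrow> real"
  assumes F: "\<And>a b. a \<le> b \<Longrightarrow> (f has_integral (F b - F a)) {a..b}"
    and c: "continuous_on UNIV f"
  shows "(F has_real_derivative f x) (at x)"
proof -
  have eq: "F y = F (x-1) + integral {x-1..y} f" if "y \<in> {x-1..x+1}" for y
    using F[of "x-1" y] that by (auto dest: integral_unique)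
  have i: "at x within {x-1..x+1} = at x" by (rule at_within_interior) simp
  have "((\<lambda>y. integral {x-1..y} f) has_real_derivative f x) (at x within {x-1..x+1})"
    by (rule integral_has_real_derivative) (auto intro: continuous_on_subset[OF c])
  then have d: "((\<lambda>y. integral {x-1..y} f) has_real_derivative f x) (at x)"
    unfolding i .
  have "((\<lambda>y. F (x-1) + integral {x-1..y} f) has_real_derivative f x) (at x)"
    using DERIV_add[OF DERIV_const[of "F (x-1)"] d] by simp
  then show ?thesis
  proof (rule has_field_derivative_transform_within_open[where S="{x-1<..<x+1}"])
    fix y assume "y \<in> {x-1<..<x+1}"
    then have "y \<in> {x-1..x+1}" by simp
    from eq[OF this] show "F (x-1) + integral {x-1..y} f = F y" by simp
  qed auto
qed


lemma ae_zero_borel: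
  fixes g :: "real \<Rightarrow> real"
  assumes gi: "integrable lborel g"
    and z: "\<And>t. (LINT x|lborel. indicator {t<..} x * g x) = 0"
  shows "AE x in lborel. g x = 0"
proof -
  have gm[measurable]: "g \<in> borel_measurable borel" using gi by auto
  define M1 where "M1 = density lborel (\<lambda>x. ennreal (g x))"
  define M2 where "M2 = density lborel (\<lambda>x. ennreal (- g x))"
  have key: "LINT x|lborel. indicator A x * g x = enn2real (emeasure M1 A) - enn2real (emeasure M2 A)
      \<and> emeasure M1 A < \<infinity> \<and> emeasure M2 A < \<infinity>" if A[measurable]: "A \<in> sets borel" for A
  proof -
    have ii: "integrable lborel (\<lambda>x. indicator A x * g x)"
      using integrable_mult_indicator[OF _ gi, of A] that by (simp add: mult.commute)
    have e1: "emeasure M1 A = (\<integral>\<^sup>+x. ennreal (indicator A x * g x) \<partial>lborel)"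
      unfolding M1_def by (subst emeasure_density) (auto intro!: nn_integral_cong simp: indicator_def)
    have e2: "emeasure M2 A = (\<integral>\<^sup>+x. ennreal (- (indicator A x * g x)) \<partial>lborel)"
      unfolding M2_def by (subst emeasure_density) (auto intro!: nn_integral_cong simp: indicator_def)
    show ?thesis
      using real_lebesgue_integral_def[OF ii] integrableD(2,3)[OF ii] e1 e2
      by (simp add: less_top)
  qed
  have "M1 = M2"
  proof (rule measure_eqI_lessThan)
    show "sets M1 = sets borel" "sets M2 = sets borel" by (simp_all add: M1_def M2_def)
    fix x
    show "emeasure M1 {x<..} < \<infinity>" using key[of "{x<..}"] by simp
    have e: "enn2real (emeasure M1 {x<..}) = enn2real (emeasure M2 {x<..})"
      using key[of "{x<..}"] z[of x] by simp
    have f1: "emeasure M1 {x<..} < \<infinity>" "emeasure M2 {x<..} < \<infinity>" using key[of "{x<..}"] by auto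
    have "emeasure M1 {x<..} = ennreal (enn2real (emeasure M1 {x<..}))" using f1 by simp
    also have "\<dots> = ennreal (enn2real (emeasure M2 {x<..}))" using e by simp
    also have "\<dots> = emeasure M2 {x<..}" using f1 by simp
    finally show "emeasure M1 {x<..} = emeasure M2 {x<..}" .
  qed
  have "AE x in lborel. g x = 0"
  proof (rule density_unique_real[where f'="\<lambda>x. 0", simplified])
    show "integrable lborel g" by fact
    fix A :: "real set" assume A: "A \<in> sets lborel"
    then show "set_lebesgue_integral lborel A g = 0"
      using key[of A] \<open>M1 = M2\<close> by (simp add: set_lebesgue_integral_def)
  qed
  then show ?thesis .
qed

lemma negligible_of_zero_intervals:
  fixes D :: "real \<Rightarrow> real"
  assumes ai: "D absolutely_integrable_on {a..b}"
    and z: "\<And>c d. a \<le> c \<Longrightarrow> c \<le> d \<Longrightarrow> d \<le> b \<Longrightarrow> integral {c..d} D = 0"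
  shows "negligible {x\<in>{a..b}. D x \<noteq> 0}"
proof -
  define f where "f = (\<lambda>x. indicator {a..b} x * D x)"
  have fi: "integrable lebesgue f"
    using ai unfolding set_integrable_def f_def by simp
  then have "f \<in> borel_measurable lebesgue" by auto
  then obtain g where gm: "g \<in> borel_measurable lborel" and fg: "AE x in lborel. f x = g x"
    using completion_ex_borel_measurable_real[of f lborel] by auto
  have fgl: "AE x in lebesgue. f x = g x" using fg by (rule AE_completion)
  have "integrable lebesgue g" by (rule integrable_cong_AE_imp[OF fi measurable_completion[OF gm] fgl])
  then have gi: "integrable lborel g" using integrable_completion[OF gm] by simp
  have z2: "(LINT x|lborel. indicator {t<..} x * g x) = 0" for t
  proof -
    have m: "(\<lambda>x. indicator {t<..} x * g x) \<in> borel_measurable lborel" using gm by measurable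
    have "(LINT x|lborel. indicator {t<..} x * g x) = (LINT x|lebesgue. indicator {t<..} x * g x)"
      using integral_completion[OF m] by simp
    also have "\<dots> = (LINT x|lebesgue. indicator {t<..} x * f x)"
    proof (rule integral_cong_AE)
      show "(\<lambda>x. indicat_real {t<..} x * g x) \<in> borel_measurable lebesgue"
        using measurable_completion[OF m] by simp
      have "f \<in> borel_measurable lebesgue" using fi by auto
      then show "(\<lambda>x. indicat_real {t<..} x * f x) \<in> borel_measurable lebesgue"
        by (intro borel_measurable_times borel_measurable_indicator) auto
      show "AE x in lebesgue. indicat_real {t<..} x * g x = indicat_real {t<..} x * f x"
        using fgl by auto
    qed
    also have "\<dots> = (LINT x:({t<..} \<inter> {a..b})|lebesgue. D x)"
      unfolding set_lebesgue_integral_def f_def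
      by (rule Bochner_Integration.integral_cong) (auto simp: indicator_def)
    also have "\<dots> = integral ({t<..} \<inter> {a..b}) D"
      by (rule set_lebesgue_integral_eq_integral(2), rule set_integrable_subset[OF ai]) auto
    also have "\<dots> = 0"
    proof (cases "t < a")
      case True
      then have "{t<..} \<inter> {a..b} = {a..b}" by auto
      then show ?thesis using z[of a b] by (cases "a \<le> b") auto
    next
      case False
      show ?thesis
      proof (cases "b \<le> t")
        case True
        then have "{t<..} \<inter> {a..b} = {}" by auto
        then show ?thesis by simp
      next
        case False2: False
        then have e: "{t<..} \<inter> {a..b} = {t<..b}" using False by auto
        have "\<And>y. (D has_integral y) {t<..b} \<longleftrightarrow> (D has_integral y) {t..b}"
          by (rule has_integral_spike_set_eq) (auto intro: negligible_subset[of "{t}"])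
        then have "integral {t<..b} D = integral {t..b} D" unfolding integral_def integrable_on_def by simp
        then show ?thesis using e z[of t b] False False2 by simp
      qed
    qed
    finally show ?thesis .
  qed
  have "AE x in lborel. g x = 0" by (rule ae_zero_borel[OF gi z2])
  then have "AE x in lebesgue. f x = 0" using fg by (auto intro: AE_completion)
  then have "{x \<in> space lebesgue. \<not> f x = 0} \<in> null_sets lebesgue"
    by (simp add: completion.AE_iff_null_sets)
  moreover have "{x\<in>{a..b}. D x \<noteq> 0} \<subseteq> {x \<in> space lebesgue. \<not> f x = 0}"
    by (auto simp: f_def)
  ultimately show ?thesis
    unfolding negligible_iff_null_sets by (rule completion.complete2[rotated])
qed


lemma weak_deriv_cont:
  assumes "weak_deriv f g" shows "isCont f x"
  by (rule intrep_continuous[of g f]) (use assms in \<open>auto simp: weak_deriv_def\<close>)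

lemma weak_deriv_cont_on:
  assumes "weak_deriv f g" shows "continuous_on S f"
  using weak_deriv_cont[OF assms] by (simp add: continuous_at_imp_continuous_on)

lemma weak_deriv_C1:
  assumes "weak_deriv f g" "continuous_on UNIV g"
  shows "(f has_real_derivative g x) (at x)"
  by (rule intrep_deriv[of g f]) (use assms in \<open>auto simp: weak_deriv_def\<close>)

lemma weak_deriv_deriv:
  assumes "weak_deriv f g" "continuous_on UNIV g"
  shows "deriv f = g"
  using weak_deriv_C1[OF assms] DERIV_imp_deriv by blast

lemma weak_deriv_unique:
  assumes "weak_deriv F h" "weak_deriv F k" and ab: "a \<le> b"
  shows "negligible {x\<in>{a..b}. h x \<noteq> k x}"
proof -
  have "negligible {x\<in>{a..b}. h x - k x \<noteq> 0}"
  proof (rule negligible_of_zero_intervals)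
    show "(\<lambda>x. h x - k x) absolutely_integrable_on {a..b}"
      using assms unfolding weak_deriv_def
      by (intro set_integral_diff(1)) auto
    fix c d :: real assume "c \<le> d"
    then have "(h has_integral (F d - F c)) {c..d}" "(k has_integral (F d - F c)) {c..d}"
      using assms unfolding weak_deriv_def by auto
    then have "((\<lambda>x. h x - k x) has_integral ((F d - F c) - (F d - F c))) {c..d}"
      by (rule has_integral_diff)
    then show "integral {c..d} (\<lambda>x. h x - k x) = 0"
      by (simp add: integral_unique)
  qed
  then show ?thesis by simp
qed

lemma periodic_int:
  assumes "periodic_2pi f"
  shows "f (x + 2*pi*real n) = f x" "f (x - 2*pi*real n) = f x"
proof -
  show a: "f (x + 2*pi*real n) = f x" for x
  proof (induction n)
    case (Suc n)
    have "f (x + 2*pi*real (Suc n)) = f ((x + 2*pi*real n) + 2*pi)" by (simp add: algebra_simps)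
    also have "\<dots> = f (x + 2*pi*real n)" using assms by (simp add: periodic_2pi_def)
    finally show ?case using Suc by simp
  qed simp
  show "f (x - 2*pi*real n) = f x" using a[of "x - 2*pi*real n"] by simp
qed

lemma periodic_reduce:
  assumes "periodic_2pi f"
  shows "\<exists>y\<in>{-pi..pi}. f x = f y"
proof -
  define k where "k = floor ((x + pi) / (2*pi))"
  define y where "y = x - 2*pi*k"
  have k1: "real_of_int k \<le> (x + pi) / (2*pi)" "(x + pi) / (2*pi) < real_of_int k + 1"
    unfolding k_def by linarith+
  have "y \<in> {-pi..pi}"
    using k1 pi_gt_zero unfolding y_def by (auto simp: field_simps)
  moreover have "f x = f y"
  proof (cases "k \<ge> 0")
    case True
    then have "y = x - 2*pi*real (nat k)" unfolding y_def by simp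
    then show ?thesis using periodic_int(2)[OF assms, of x "nat k"] by simp
  next
    case False
    then have "y = x + 2*pi*real (nat (-k))" unfolding y_def by simp
    then show ?thesis using periodic_int(1)[OF assms, of x "nat (-k)"] by simp
  qed
  ultimately show ?thesis by blast
qed

lemma prim_shift:
  assumes li: "\<And>a b. f integrable_on {a..b}" and per: "periodic_2pi f"
  shows "prim f (t + 2*pi) - prim f t = prim f (s + 2*pi) - prim f s"
proof -
  have D: "prim f (b + 2*pi) - prim f (a + 2*pi) = prim f b - prim f a" if "a \<le> b" for a b
  proof -
    have "(f has_integral (prim f (b + 2*pi) - prim f (a + 2*pi))) {a + 2*pi..b + 2*pi}"
      using prim_has_integral[OF li] that by simp
    then have "((\<lambda>x. f (x + 2*pi)) has_integral (prim f (b + 2*pi) - prim f (a + 2*pi))) {a..b}"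
      using has_integral_shift_real_ivl[of f _ "a + 2*pi" "b+2*pi" "2*pi"] by simp
    then have "(f has_integral (prim f (b + 2*pi) - prim f (a + 2*pi))) {a..b}"
      using per by (simp add: periodic_2pi_def)
    moreover have "(f has_integral (prim f b - prim f a)) {a..b}"
      using prim_has_integral[OF li that] .
    ultimately show ?thesis by (rule has_integral_unique)
  qed
  show ?thesis
  proof (cases "t \<le> s")
    case True then show ?thesis using D[of t s] by simp
  next
    case False then show ?thesis using D[of s t] by simp
  qed
qed

lemma prim_periodic:
  assumes li: "\<And>a b. f integrable_on {a..b}" and per: "periodic_2pi f"
    and z: "integral {-pi..pi} f = 0"
  shows "periodic_2pi (prim f)"
proof -
  have "prim f pi - prim f (-pi) = 0"
    using prim_has_integral[OF li, of "-pi" pi] z by (simp add: integral_unique)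
  then show ?thesis
    unfolding periodic_2pi_def using prim_shift[OF li per, of _ "-pi"] by simp
qed

lemma weak_deriv_prim:
  assumes "\<And>a b. f absolutely_integrable_on {a..b}"
  shows "weak_deriv (prim f) f"
  unfolding weak_deriv_def
  using assms prim_has_integral[of f] set_lebesgue_integral_eq_integral(1) by blast

lemma prim_bound:
  assumes ai: "f absolutely_integrable_on {-pi..pi}" and t: "t \<in> {-pi..pi}"
  shows "\<bar>prim f t\<bar> \<le> integral {-pi..pi} (\<lambda>x. \<bar>f x\<bar>)"
proof -
  have fi: "f integrable_on {-pi..pi}" and fa: "(\<lambda>x. \<bar>f x\<bar>) integrable_on {-pi..pi}"
    using ai by (auto simp: absolutely_integrable_on_def)
  have sub: "\<bar>integral {c..d} f\<bar> \<le> integral {-pi..pi} (\<lambda>x. \<bar>f x\<bar>)"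
    if "-pi \<le> c" "c \<le> d" "d \<le> pi" for c d
  proof -
    have s: "{c..d} \<subseteq> {-pi..pi}" using that by auto
    have "\<bar>integral {c..d} f\<bar> \<le> integral {c..d} (\<lambda>x. \<bar>f x\<bar>)"
      using integral_norm_bound_integral[OF integrable_on_subinterval[OF fi s]
          integrable_on_subinterval[OF fa s]] by simp
    also have "\<dots> \<le> integral {-pi..pi} (\<lambda>x. \<bar>f x\<bar>)"
      by (rule integral_subset_le[OF s integrable_on_subinterval[OF fa s] fa]) simp
    finally show ?thesis .
  qed
  show ?thesis
    using sub[of 0 t] sub[of t 0] t by (auto simp: prim_def)
qed


definition tr :: "real \<Rightarrow> real \<Rightarrow> real" where
  "tr N y = max (-N) (min N y)"

lemma tr_bound: "0 \<le> N \<Longrightarrow> \<bar>tr N y - y\<bar> \<le> \<bar>y\<bar>"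
  by (auto simp: tr_def)

lemma tr_abs: "0 \<le> N \<Longrightarrow> \<bar>tr N y\<bar> \<le> N"
  by (auto simp: tr_def)

lemma tr_mono: "0 \<le> N \<Longrightarrow> N \<le> M \<Longrightarrow> \<bar>tr M y - y\<bar> \<le> \<bar>tr N y - y\<bar>"
  by (auto simp: tr_def)

lemma tr_eq: "\<bar>y\<bar> \<le> N \<Longrightarrow> tr N y = y"
  by (auto simp: tr_def)

lemma antitone_tendsto:
  fixes F :: "real \<Rightarrow> real"
  assumes mono: "\<And>N M. 0 \<le> N \<Longrightarrow> N \<le> M \<Longrightarrow> F M \<le> F N"
    and nn: "\<And>N. 0 \<le> N \<Longrightarrow> 0 \<le> F N"
    and lim: "(\<lambda>n. F (real n)) \<longlonglongrightarrow> 0"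
  shows "(F \<longlongrightarrow> 0) at_top"
proof (rule tendstoI)
  fix e :: real assume e: "e > 0"
  from tendstoD[OF lim e] obtain n0 where n0: "\<And>n. n \<ge> n0 \<Longrightarrow> dist (F (real n)) 0 < e"
    by (auto simp: eventually_sequentially)
  have "dist (F N) 0 < e" if "N \<ge> real n0" for N
  proof -
    have "F N \<le> F (real n0)" using mono[of "real n0" N] that by simp
    moreover have "0 \<le> F N" using nn[of N] that by simp
    moreover have "F (real n0) < e" using n0[of n0] nn[of "real n0"] by simp
    ultimately show ?thesis by simp
  qed
  then show "eventually (\<lambda>N. dist (F N) 0 < e) at_top"
    by (auto simp: eventually_at_top_linorder)
qed

locale wdata =
  fixes w w1 w2 :: "real \<Rightarrow> real"
  assumes pw: "periodic_2pi w" and pw1: "periodic_2pi w1" and pw2: "periodic_2pi w2"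
    and d1: "weak_deriv w w1" and d2: "weak_deriv w1 w2"
    and sq: "(\<lambda>x. (w2 x)\<^sup>2) integrable_on {-pi..pi}"
begin

lemma w1c: "continuous_on S w1" by (rule weak_deriv_cont_on[OF d2])
lemma wc: "continuous_on S w" by (rule weak_deriv_cont_on[OF d1])
lemma dw: "deriv w = w1" by (rule weak_deriv_deriv[OF d1 w1c])

lemma w2ai: "w2 absolutely_integrable_on {a..b}"
proof (cases "a \<le> b")
  case True then show ?thesis using d2 by (auto simp: weak_deriv_def)
next
  case False then show ?thesis by simp
qed

lemma w2m: "w2 \<in> borel_measurable (lebesgue_on {a..b})"
  using w2ai by (simp add: absolutely_integrable_measurable)

lemma w2int0: "integral {-pi..pi} w2 = 0"
proof -
  have "(w2 has_integral (w1 pi - w1 (-pi))) {-pi..pi}"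
    using d2 unfolding weak_deriv_def by simp
  moreover have "w1 pi = w1 (-pi)"
    using pw1 unfolding periodic_2pi_def by (metis add.commute diff_add_cancel mult_2 diff_minus_eq_add)
  ultimately show ?thesis by (simp add: integral_unique)
qed

definition q :: "real \<Rightarrow> real \<Rightarrow> real" where "q N x = tr N (w2 x) - w2 x"

lemma q_meas: "q N \<in> borel_measurable (lebesgue_on {a..b})"
proof -
  have [measurable]: "w2 \<in> borel_measurable (lebesgue_on {a..b})" by (rule w2m)
  show ?thesis unfolding q_def tr_def by measurable
qed

lemma q_ai: "0 \<le> N \<Longrightarrow> q N absolutely_integrable_on {a..b}"
  by (rule measurable_bounded_by_integrable_imp_absolutely_integrable[where g="\<lambda>x. \<bar>w2 x\<bar>", OF q_meas])
     (use w2ai in \<open>auto simp: q_def tr_bound absolutely_integrable_on_def\<close>)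

lemma q_per: "periodic_2pi (q N)"
  using pw2 by (simp add: periodic_2pi_def q_def)

lemma q_sq_int: "0 \<le> N \<Longrightarrow> (\<lambda>x. (q N x)\<^sup>2) integrable_on {-pi..pi}"
proof -
  assume N: "0 \<le> N"
  have [measurable]: "q N \<in> borel_measurable (lebesgue_on {-pi..pi})" by (rule q_meas)
  have m: "(\<lambda>x. (q N x)\<^sup>2) \<in> borel_measurable (lebesgue_on {-pi..pi})" by measurable
  show ?thesis
    by (rule measurable_bounded_by_integrable_imp_integrable[OF m sq])
       (use N tr_bound in \<open>auto simp: q_def abs_le_square_iff[symmetric]\<close>)
qed

definition rho :: "real \<Rightarrow> real" where "rho N = integral {-pi..pi} (\<lambda>x. \<bar>q N x\<bar>)"
definition tau :: "real \<Rightarrow> real" where "tau N = integral {-pi..pi} (\<lambda>x. (q N x)\<^sup>2)"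

lemma q_abs_int: "0 \<le> N \<Longrightarrow> (\<lambda>x. \<bar>q N x\<bar>) integrable_on {a..b}"
  using q_ai by (auto simp: absolutely_integrable_on_def)

lemma q_int: "0 \<le> N \<Longrightarrow> q N integrable_on {a..b}"
  using q_ai by (auto simp: absolutely_integrable_on_def)

lemma q_lim: "(\<lambda>k. q (real k) x) \<longlonglongrightarrow> 0"
proof (rule tendsto_eventually)
  show "eventually (\<lambda>k. q (real k) x = 0) sequentially"
    unfolding eventually_sequentially
  proof (rule exI[of _ "nat (ceiling \<bar>w2 x\<bar>)"], intro allI impI)
    fix n assume "nat (ceiling \<bar>w2 x\<bar>) \<le> n"
    then have "\<bar>w2 x\<bar> \<le> real n" by linarith
    then show "q (real n) x = 0" by (simp add: q_def tr_eq)
  qed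
qed

lemma rho_nn: "0 \<le> N \<Longrightarrow> 0 \<le> rho N"
  unfolding rho_def by (rule integral_nonneg) (auto simp: q_abs_int)

lemma tau_nn: "0 \<le> N \<Longrightarrow> 0 \<le> tau N"
  unfolding tau_def by (rule integral_nonneg) (auto simp: q_sq_int)

lemma rho_lim: "(rho \<longlongrightarrow> 0) at_top"
proof (rule antitone_tendsto)
  show "rho M \<le> rho N" if "0 \<le> N" "N \<le> M" for N M
    unfolding rho_def using that
    by (intro integral_le q_abs_int) (auto simp: q_def intro: tr_mono)
  show "0 \<le> rho N" if "0 \<le> N" for N by (rule rho_nn[OF that])
  have "(\<lambda>k. integral {-pi..pi} (\<lambda>x. \<bar>q (real k) x\<bar>)) \<longlonglongrightarrow> integral {-pi..pi} (\<lambda>x. 0)"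
    by (rule dominated_convergence(2)[where h="\<lambda>x. \<bar>w2 x\<bar>"])
       (use w2ai q_abs_int tendsto_rabs[OF q_lim] in \<open>auto simp: absolutely_integrable_on_def q_def tr_bound\<close>)
  then show "(\<lambda>n. rho (real n)) \<longlonglongrightarrow> 0" by (simp add: rho_def)
qed

lemma tau_lim: "(tau \<longlongrightarrow> 0) at_top"
proof (rule antitone_tendsto)
  show "tau M \<le> tau N" if "0 \<le> N" "N \<le> M" for N M
    unfolding tau_def using that
    by (intro integral_le q_sq_int) (auto simp: q_def abs_le_square_iff[symmetric] intro: tr_mono)
  show "0 \<le> tau N" if "0 \<le> N" for N by (rule tau_nn[OF that])
  have "(\<lambda>k. integral {-pi..pi} (\<lambda>x. (q (real k) x)\<^sup>2)) \<longlonglongrightarrow> integral {-pi..pi} (\<lambda>x. 0)"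
    by (rule dominated_convergence(2)[where h="\<lambda>x. (w2 x)\<^sup>2"])
       (use sq q_sq_int tendsto_power[OF q_lim, of _ 2] in \<open>auto simp: q_def tr_bound abs_le_square_iff[symmetric]\<close>)
  then show "(\<lambda>n. tau (real n)) \<longlonglongrightarrow> 0" by (simp add: tau_def)
qed

end

lemma weak_deriv_lin:
  assumes f: "weak_deriv f f'" and g: "weak_deriv g g'"
  shows "weak_deriv (\<lambda>x. a * (f x + g x + k)) (\<lambda>x. a * (f' x + g' x))"
  unfolding weak_deriv_def
proof (intro allI impI conjI)
  fix l r :: real assume lr: "l \<le> r"
  have fa: "f' absolutely_integrable_on {l..r}" "(f' has_integral (f r - f l)) {l..r}"
    using f lr by (auto simp: weak_deriv_def)
  have ga: "g' absolutely_integrable_on {l..r}" "(g' has_integral (g r - g l)) {l..r}"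
    using g lr by (auto simp: weak_deriv_def)
  show "(\<lambda>x. a * (f' x + g' x)) absolutely_integrable_on {l..r}"
    using set_integrable_mult_right[OF set_integral_add(1)[OF fa(1) ga(1)], of a] by simp
  have "((\<lambda>x. f' x + g' x) has_integral ((f r - f l) + (g r - g l))) {l..r}"
    by (rule has_integral_add[OF fa(2) ga(2)])
  then have "((\<lambda>x. a * (f' x + g' x)) has_integral (a * ((f r - f l) + (g r - g l)))) {l..r}"
    by (rule has_integral_mult_right)
  moreover have "a * ((f r - f l) + (g r - g l)) = a * (f r + g r + k) - a * (f l + g l + k)"
    by (simp add: algebra_simps)
  ultimately show "((\<lambda>x. a * (f' x + g' x)) has_integral (a * (f r + g r + k) - a * (f l + g l + k))) {l..r}"
    by simp
qed

lemma weak_deriv_diff: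
  assumes f: "weak_deriv f f'" and g: "weak_deriv g g'"
  shows "weak_deriv (\<lambda>x. f x - g x) (\<lambda>x. f' x - g' x)"
  unfolding weak_deriv_def
proof (intro allI impI conjI)
  fix l r :: real assume lr: "l \<le> r"
  have fa: "f' absolutely_integrable_on {l..r}" "(f' has_integral (f r - f l)) {l..r}"
    using f lr by (auto simp: weak_deriv_def)
  have ga: "g' absolutely_integrable_on {l..r}" "(g' has_integral (g r - g l)) {l..r}"
    using g lr by (auto simp: weak_deriv_def)
  show "(\<lambda>x. f' x - g' x) absolutely_integrable_on {l..r}"
    by (rule set_integral_diff(1)[OF fa(1) ga(1)])
  have "((\<lambda>x. f' x - g' x) has_integral ((f r - f l) - (g r - g l))) {l..r}"
    by (rule has_integral_diff[OF fa(2) ga(2)])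
  then show "((\<lambda>x. f' x - g' x) has_integral (f r - g r - (f l - g l))) {l..r}"
    by (simp add: algebra_simps)
qed

lemma periodic_bound:
  assumes "periodic_2pi f" "continuous_on {-pi..pi} f"
  obtains B where "B \<ge> 0" "\<And>x. \<bar>f x\<bar> \<le> B"
proof -
  obtain B where B: "B \<ge> 0" "\<And>x. x \<in> {-pi..pi} \<Longrightarrow> norm (f x) \<le> B"
    using continuous_on_compact_bound[OF compact_Icc assms(2)] by blast
  have "\<bar>f x\<bar> \<le> B" for x
    using periodic_reduce[OF assms(1), of x] B(2) by auto
  then show ?thesis using B(1) that by blast
qed

locale wdata2 = wdata +
  assumes ge1: "\<And>t. w t \<ge> 1"
    and cons: "integral {-pi..pi} (\<lambda>t. (w t)\<^sup>2 - (w1 t)\<^sup>2) = 0"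
begin

definition c :: "real \<Rightarrow> real" where "c N = integral {-pi..pi} (q N) / (2*pi)"
definition g :: "real \<Rightarrow> real \<Rightarrow> real" where "g N x = q N x - c N"
definition G :: "real \<Rightarrow> real \<Rightarrow> real" where "G N = prim (g N)"
definition dd :: "real \<Rightarrow> real" where "dd N = integral {-pi..pi} (G N) / (2*pi)"
definition Gd :: "real \<Rightarrow> real \<Rightarrow> real" where "Gd N x = G N x - dd N"
definition H :: "real \<Rightarrow> real \<Rightarrow> real" where "H N = prim (Gd N)"

context
  fixes N :: real assumes N: "0 \<le> N"
begin

lemma g_ai: "g N absolutely_integrable_on {a..b}"
  unfolding g_def
  by (rule set_integral_diff(1)[OF q_ai[OF N] absolutely_integrable_continuous_real]) simp

lemma g_int: "g N integrable_on {a..b}"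
  using g_ai by (simp add: absolutely_integrable_on_def)

lemma g_per: "periodic_2pi (g N)"
  using q_per by (simp add: periodic_2pi_def g_def)

lemma g_int0: "integral {-pi..pi} (g N) = 0"
  unfolding g_def c_def
  by (subst integral_diff) (use q_int[OF N] in auto)

lemma c_bound: "\<bar>c N\<bar> \<le> rho N / (2*pi)"
proof -
  have "\<bar>integral {-pi..pi} (q N)\<bar> \<le> rho N"
    unfolding rho_def
    using integral_norm_bound_integral[OF q_int[OF N] q_abs_int[OF N]] by simp
  then show ?thesis unfolding c_def by (simp add: divide_right_mono)
qed

lemma g_abs_int: "integral {-pi..pi} (\<lambda>x. \<bar>g N x\<bar>) \<le> 2 * rho N"
proof -
  have "integral {-pi..pi} (\<lambda>x. \<bar>g N x\<bar>) \<le> integral {-pi..pi} (\<lambda>x. \<bar>q N x\<bar> + \<bar>c N\<bar>)"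
    by (rule integral_le) (use g_ai q_abs_int[OF N] in \<open>auto intro!: integrable_add simp: absolutely_integrable_on_def g_def\<close>)
  also have "\<dots> = rho N + 2*pi*\<bar>c N\<bar>"
    by (subst integral_add) (use q_abs_int[OF N] in \<open>auto simp: rho_def\<close>)
  also have "\<dots> \<le> 2 * rho N"
    using c_bound by (simp add: field_simps)
  finally show ?thesis .
qed

lemma G_wd: "weak_deriv (G N) (g N)"
  unfolding G_def by (rule weak_deriv_prim[OF g_ai])

lemma G_per: "periodic_2pi (G N)"
  unfolding G_def by (rule prim_periodic[OF g_int g_per g_int0])

lemma G_cont: "continuous_on S (G N)"
  by (rule weak_deriv_cont_on[OF G_wd])

lemma G_bound: "\<bar>G N t\<bar> \<le> 2 * rho N"
proof -
  obtain y where y: "y \<in> {-pi..pi}" "G N t = G N y" using periodic_reduce[OF G_per] by blast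
  have "\<bar>G N y\<bar> \<le> integral {-pi..pi} (\<lambda>x. \<bar>g N x\<bar>)"
    unfolding G_def by (rule prim_bound[OF g_ai y(1)])
  then show ?thesis using y(2) g_abs_int by simp
qed

lemma int_bound:
  assumes "f integrable_on {-pi..pi}" "\<And>x. \<bar>f x\<bar> \<le> B"
  shows "\<bar>integral {-pi..pi} f\<bar> \<le> 2*pi*B"
proof -
  have "\<bar>integral {-pi..pi} f\<bar> \<le> integral {-pi..pi} (\<lambda>x. B)"
    using integral_norm_bound_integral[OF assms(1) integrable_continuous_interval[OF continuous_on_const]] assms by simp
  then show ?thesis by simp
qed

lemma dd_bound: "\<bar>dd N\<bar> \<le> 2 * rho N"
proof -
  have "\<bar>integral {-pi..pi} (G N)\<bar> \<le> 2*pi*(2 * rho N)"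
    by (rule int_bound[OF integrable_continuous_interval[OF G_cont] G_bound])
  then show ?thesis unfolding dd_def by (simp add: field_simps)
qed

lemma Gd_cont: "continuous_on S (Gd N)"
  unfolding Gd_def by (intro continuous_intros G_cont)

lemma Gd_per: "periodic_2pi (Gd N)"
  using G_per by (simp add: periodic_2pi_def Gd_def)

lemma Gd_int0: "integral {-pi..pi} (Gd N) = 0"
  unfolding Gd_def dd_def
  by (subst integral_diff) (use integrable_continuous_interval[OF G_cont] in auto)

lemma Gd_bound: "\<bar>Gd N t\<bar> \<le> 4 * rho N"
  using G_bound[of t] dd_bound unfolding Gd_def by simp

lemma Gd_ai: "Gd N absolutely_integrable_on {a..b}"
  by (rule absolutely_integrable_continuous_real[OF Gd_cont])

lemma H_wd: "weak_deriv (H N) (Gd N)"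
  unfolding H_def by (rule weak_deriv_prim[OF Gd_ai])

lemma H_per: "periodic_2pi (H N)"
  unfolding H_def
  by (rule prim_periodic[OF integrable_continuous_interval[OF Gd_cont] Gd_per Gd_int0])

lemma H_cont: "continuous_on S (H N)"
  by (rule weak_deriv_cont_on[OF H_wd])

lemma H_bound: "\<bar>H N t\<bar> \<le> 8 * pi * rho N"
proof -
  obtain y where y: "y \<in> {-pi..pi}" "H N t = H N y" using periodic_reduce[OF H_per] by blast
  have "\<bar>H N y\<bar> \<le> integral {-pi..pi} (\<lambda>x. \<bar>Gd N x\<bar>)"
    unfolding H_def by (rule prim_bound[OF Gd_ai y(1)])
  also have "\<dots> \<le> integral {-pi..pi} (\<lambda>x. 4 * rho N)"
    by (rule integral_le) (auto intro!: integrable_continuous_interval continuous_intros Gd_cont Gd_bound)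
  finally show ?thesis using y(2) by simp
qed

end
end

context wdata2
begin

definition W :: real where "W = (SOME B. B \<ge> 0 \<and> (\<forall>x. \<bar>w x\<bar> \<le> B))"
definition W1 :: real where "W1 = (SOME B. B \<ge> 0 \<and> (\<forall>x. \<bar>w1 x\<bar> \<le> B))"

lemma W: "0 \<le> W" "\<bar>w x\<bar> \<le> W"
proof -
  have "\<exists>B. B \<ge> 0 \<and> (\<forall>x. \<bar>w x\<bar> \<le> B)"
    using periodic_bound[OF pw wc] by metis
  from someI_ex[OF this] show "0 \<le> W" "\<bar>w x\<bar> \<le> W" unfolding W_def by auto
qed

lemma W1: "0 \<le> W1" "\<bar>w1 x\<bar> \<le> W1"
proof -
  have "\<exists>B. B \<ge> 0 \<and> (\<forall>x. \<bar>w1 x\<bar> \<le> B)"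
    using periodic_bound[OF pw1 w1c] by metis
  from someI_ex[OF this] show "0 \<le> W1" "\<bar>w1 x\<bar> \<le> W1" unfolding W1_def by auto
qed

definition v :: "real \<Rightarrow> real \<Rightarrow> real" where "v N t = w t + H N t"
definition v1 :: "real \<Rightarrow> real \<Rightarrow> real" where "v1 N t = w1 t + Gd N t"
definition EE :: "real \<Rightarrow> real" where "EE N = integral {-pi..pi} (\<lambda>t. (v N t)\<^sup>2 - (v1 N t)\<^sup>2)"
definition SS :: "real \<Rightarrow> real" where "SS N = integral {-pi..pi} (v N)"
definition gam :: "real \<Rightarrow> real" where "gam N = (sqrt ((SS N)\<^sup>2 - 2*pi*EE N) - SS N) / (2*pi)"
definition s :: "real \<Rightarrow> real" where "s N = 8*pi*rho N + \<bar>gam N\<bar>"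
definition al :: "real \<Rightarrow> real" where "al N = 1 / (1 - s N)"
definition eb :: "real \<Rightarrow> real" where
  "eb N = 2*W*(8*pi*rho N) + (8*pi*rho N)\<^sup>2 + 2*W1*(4*rho N) + (4*rho N)\<^sup>2"
definition good :: "real \<Rightarrow> bool" where
  "good N \<longleftrightarrow> 0 \<le> N \<and> 8*pi*rho N \<le> 1/4 \<and> eb N \<le> 1/16"

context
  fixes N :: real assumes N: "0 \<le> N"
begin

lemma v_cont: "continuous_on S (v N)"
  unfolding v_def by (intro continuous_intros wc H_cont[OF N])

lemma v1_cont: "continuous_on S (v1 N)"
  unfolding v1_def by (intro continuous_intros w1c Gd_cont[OF N])

lemma pt_bound: "\<bar>((v N t)\<^sup>2 - (v1 N t)\<^sup>2) - ((w t)\<^sup>2 - (w1 t)\<^sup>2)\<bar> \<le> eb N"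
proof -
  have hb: "\<bar>H N t\<bar> \<le> 8*pi*rho N" by (rule H_bound[OF N])
  have gb: "\<bar>Gd N t\<bar> \<le> 4*rho N" by (rule Gd_bound[OF N])
  have e: "((v N t)\<^sup>2 - (v1 N t)\<^sup>2) - ((w t)\<^sup>2 - (w1 t)\<^sup>2)
      = 2*(w t)*(H N t) + (H N t)\<^sup>2 - 2*(w1 t)*(Gd N t) - (Gd N t)\<^sup>2"
    unfolding v_def v1_def by (simp add: power2_eq_square algebra_simps)
  have a1: "\<bar>2*(w t)*(H N t)\<bar> \<le> 2*W*(8*pi*rho N)"
    using mult_mono[OF W(2)[of t] hb] W(1) by (simp add: abs_mult mult_ac)
  have a2: "\<bar>2*(w1 t)*(Gd N t)\<bar> \<le> 2*W1*(4*rho N)"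
    using mult_mono[OF W1(2)[of t] gb] W1(1) by (simp add: abs_mult mult_ac)
  have a3: "(H N t)\<^sup>2 \<le> (8*pi*rho N)\<^sup>2"
    using hb abs_le_square_iff by (metis abs_of_nonneg abs_ge_zero order_trans)
  have a4: "(Gd N t)\<^sup>2 \<le> (4*rho N)\<^sup>2"
    using gb abs_le_square_iff by (metis abs_of_nonneg abs_ge_zero order_trans)
  have z: "0 \<le> (H N t)\<^sup>2" "0 \<le> (Gd N t)\<^sup>2" by simp_all
  show ?thesis unfolding e eb_def
    by (rule abs_leI) (use abs_le_D1[OF a1] abs_le_D2[OF a1] abs_le_D1[OF a2] abs_le_D2[OF a2] a3 a4 z in linarith)+
qed

lemma E_bound: "\<bar>EE N\<bar> \<le> 2*pi*eb N"
proof -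
  have i1: "(\<lambda>t. (v N t)\<^sup>2 - (v1 N t)\<^sup>2) integrable_on {-pi..pi}"
    by (intro integrable_continuous_interval continuous_intros v_cont v1_cont)
  have i2: "(\<lambda>t. (w t)\<^sup>2 - (w1 t)\<^sup>2) integrable_on {-pi..pi}"
    by (intro integrable_continuous_interval continuous_intros wc w1c)
  have "EE N = EE N - integral {-pi..pi} (\<lambda>t. (w t)\<^sup>2 - (w1 t)\<^sup>2)" using cons by simp
  also have "\<dots> = integral {-pi..pi} (\<lambda>t. ((v N t)\<^sup>2 - (v1 N t)\<^sup>2) - ((w t)\<^sup>2 - (w1 t)\<^sup>2))"
    unfolding EE_def by (rule integral_diff[OF i1 i2, symmetric])
  finally have e: "EE N = \<dots>" .
  show ?thesis unfolding e
    by (rule int_bound[OF N integrable_diff[OF i1 i2] pt_bound])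
qed

lemma S_lower: "SS N \<ge> 2*pi*(1 - 8*pi*rho N)"
proof -
  have "integral {-pi..pi} (\<lambda>t. 1 - 8*pi*rho N) \<le> integral {-pi..pi} (v N)"
  proof (rule integral_le)
    show "(\<lambda>t. 1 - 8*pi*rho N) integrable_on {-pi..pi}"
      by (rule integrable_continuous_interval[OF continuous_on_const])
    show "v N integrable_on {-pi..pi}" by (rule integrable_continuous_interval[OF v_cont])
    fix t show "1 - 8*pi*rho N \<le> v N t"
      using ge1[of t] H_bound[OF N, of t] unfolding v_def by (simp add: abs_le_iff)
  qed
  then show ?thesis unfolding SS_def by simp
qed

end

context
  fixes N :: real assumes gd: "good N"
begin

lemma gN: "0 \<le> N" using gd by (simp add: good_def)

lemma rho_small: "8*pi*rho N \<le> 1/4" and eb_small: "eb N \<le> 1/16"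
  using gd by (simp_all add: good_def)

lemma S_pos: "SS N \<ge> pi"
proof -
  have "2*pi*(1 - 8*pi*rho N) \<ge> 2*pi*(3/4)"
    using rho_small by (intro mult_left_mono) auto
  then show ?thesis using S_lower[OF gN] pi_gt_zero by linarith
qed

lemma E_small: "\<bar>EE N\<bar> \<le> 2*pi*eb N" "\<bar>EE N\<bar> \<le> pi/8"
proof -
  show "\<bar>EE N\<bar> \<le> 2*pi*eb N" by (rule E_bound[OF gN])
  also have "\<dots> \<le> 2*pi*(1/16)" using eb_small by (intro mult_left_mono) auto
  finally show "\<bar>EE N\<bar> \<le> pi/8" by simp
qed

lemma disc: "(SS N)\<^sup>2 - 2*pi*EE N \<ge> 0"
proof -
  have s0: "0 \<le> SS N" using S_pos pi_gt_zero by linarith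
  have "pi * pi \<le> SS N * SS N" using S_pos pi_gt_zero s0 by (intro mult_mono) auto
  moreover have "2*pi*EE N \<le> 2*pi*(pi/8)" using E_small(2) by (intro mult_left_mono) auto
  moreover have "2*pi*(pi/8) = (pi*pi)/4" by simp
  moreover have "0 \<le> pi*pi" by simp
  ultimately show ?thesis unfolding power2_eq_square by linarith
qed

lemma gam_eq: "2*pi*(gam N)\<^sup>2 + 2*SS N*gam N + EE N = 0"
proof -
  define R where "R = sqrt ((SS N)\<^sup>2 - 2*pi*EE N)"
  have R2: "R\<^sup>2 = (SS N)\<^sup>2 - 2*pi*EE N" unfolding R_def by (rule real_sqrt_pow2[OF disc])
  have "gam N = (R - SS N) / (2*pi)" unfolding gam_def R_def by simp
  then have R': "R = SS N + 2*pi*gam N" using pi_gt_zero by (simp add: field_simps)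
  have "2*pi*(2*pi*(gam N)\<^sup>2 + 2*SS N*gam N + EE N) = 0"
    using R2 unfolding R' by (simp add: power2_eq_square algebra_simps)
  then show ?thesis using pi_gt_zero by simp
qed

lemma gam_bound: "\<bar>gam N\<bar> \<le> 2 * eb N" "\<bar>gam N\<bar> \<le> 1/8"
proof -
  define R where "R = sqrt ((SS N)\<^sup>2 - 2*pi*EE N)"
  have R0: "R \<ge> 0" unfolding R_def using disc by simp
  have R2: "R\<^sup>2 = (SS N)\<^sup>2 - 2*pi*EE N" unfolding R_def by (rule real_sqrt_pow2[OF disc])
  have g: "gam N = (R - SS N) / (2*pi)" unfolding gam_def R_def by simp
  have "(R - SS N) * (R + SS N) = - 2*pi*EE N" using R2 by (simp add: algebra_simps power2_eq_square)
  then have p0: "\<bar>(R - SS N) * (R + SS N)\<bar> = 2*pi*\<bar>EE N\<bar>"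
    using pi_gt_zero by (simp add: abs_mult)
  have "R + SS N \<ge> 0" using R0 S_pos pi_gt_zero by linarith
  then have p: "\<bar>R - SS N\<bar> * (R + SS N) = 2*pi*\<bar>EE N\<bar>"
    using p0 by (simp add: abs_mult)
  have "\<bar>R - SS N\<bar> * pi \<le> \<bar>R - SS N\<bar> * (R + SS N)"
    using R0 S_pos by (intro mult_left_mono) auto
  then have "\<bar>R - SS N\<bar> * pi \<le> 2*pi*\<bar>EE N\<bar>" using p by simp
  then have "\<bar>R - SS N\<bar> \<le> 2*\<bar>EE N\<bar>" using pi_gt_zero by (simp add: mult.commute)
  then have gb: "\<bar>gam N\<bar> \<le> \<bar>EE N\<bar> / pi" unfolding g using pi_gt_zero
    by (simp add: abs_divide field_simps)
  have gb': "pi * \<bar>gam N\<bar> \<le> \<bar>EE N\<bar>" using gb pi_gt_zero by (simp add: field_simps)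
  have "pi * \<bar>gam N\<bar> \<le> pi * (2 * eb N)" using gb' E_small(1) by linarith
  then show "\<bar>gam N\<bar> \<le> 2 * eb N" using pi_gt_zero by (rule mult_left_le_imp_le)
  have "pi * \<bar>gam N\<bar> \<le> pi * (1/8)" using gb' E_small(2) by linarith
  then show "\<bar>gam N\<bar> \<le> 1/8" using pi_gt_zero by (rule mult_left_le_imp_le)
qed

lemma s_bounds: "0 \<le> s N" "s N \<le> 3/8"
  using rho_small gam_bound(2) rho_nn[OF gN] unfolding s_def by auto

lemma al_props: "1 \<le> al N" "al N \<le> 2" "al N * (1 - s N) = 1" "al N * s N = al N - 1"
  using s_bounds unfolding al_def by (auto simp: field_simps)

end
end

lemma sq_sum_le: "(a + b)\<^sup>2 \<le> 2*a\<^sup>2 + 2*(b::real)\<^sup>2"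
proof -
  have "0 \<le> (a - b)\<^sup>2" by simp
  then show ?thesis by (simp add: power2_eq_square algebra_simps)
qed

context wdata2
begin

definition u :: "real \<Rightarrow> real \<Rightarrow> real" where "u N = (\<lambda>t. al N * (w t + H N t + gam N))"
definition u1 :: "real \<Rightarrow> real \<Rightarrow> real" where "u1 N = (\<lambda>t. al N * (w1 t + Gd N t))"
definition u2 :: "real \<Rightarrow> real \<Rightarrow> real" where "u2 N = (\<lambda>t. al N * (w2 t + g N t))"

context
  fixes N :: real assumes gd: "good N"
begin

lemma u_wd: "weak_deriv (u N) (u1 N)"
  unfolding u_def u1_def by (rule weak_deriv_lin[OF d1 H_wd[OF gN[OF gd]]])

lemma u1_wd: "weak_deriv (u1 N) (u2 N)"
proof -
  have "u1 N = (\<lambda>t. al N * (w1 t + G N t + - dd N))"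
    unfolding u1_def Gd_def by (simp add: algebra_simps)
  then show ?thesis
    unfolding u2_def by (simp only:) (rule weak_deriv_lin[OF d2 G_wd[OF gN[OF gd]]])
qed

lemma u1_cont: "continuous_on S (u1 N)"
  by (rule weak_deriv_cont_on[OF u1_wd])

lemma du: "deriv (u N) = u1 N"
  by (rule weak_deriv_deriv[OF u_wd u1_cont])

lemma u_per: "periodic_2pi (u N)"
  using pw H_per[OF gN[OF gd]] by (simp add: periodic_2pi_def u_def)

lemma u1_per: "periodic_2pi (u1 N)"
  using pw1 Gd_per[OF gN[OF gd]] by (simp add: periodic_2pi_def u1_def)

lemma u2_per: "periodic_2pi (u2 N)"
  using pw2 g_per[OF gN[OF gd]] by (simp add: periodic_2pi_def u2_def)

lemma u2_bound: "\<bar>u2 N t\<bar> \<le> al N * (N + \<bar>c N\<bar>)"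
proof -
  have "w2 t + g N t = tr N (w2 t) - c N" by (simp add: g_def q_def)
  then have "\<bar>w2 t + g N t\<bar> \<le> N + \<bar>c N\<bar>" using tr_abs[OF gN[OF gd], of "w2 t"] by simp
  then show ?thesis unfolding u2_def using al_props(1)[OF gd]
    by (simp add: abs_mult)
qed

lemma u_W2inf: "W2inf_S1 (u N)"
  unfolding W2inf_S1_def using u_per u1_per u2_per u_wd u1_wd u2_bound by blast

lemma u_ge1: "u N t \<ge> 1"
proof -
  have "w t + H N t + gam N \<ge> 1 - s N"
    using ge1[of t] H_bound[OF gN[OF gd], of t] abs_ge_minus_self[of "gam N"] unfolding s_def
    by (simp add: abs_le_iff)
  then have "al N * (w t + H N t + gam N) \<ge> al N * (1 - s N)"
    using al_props(1)[OF gd] by (intro mult_left_mono) auto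
  then show ?thesis using al_props(3)[OF gd] unfolding u_def by simp
qed

lemma u_cons: "integral {-pi..pi} (\<lambda>t. (u N t)\<^sup>2 - (deriv (u N) t)\<^sup>2) = 0"
proof -
  have N: "0 \<le> N" by (rule gN[OF gd])
  have e: "(u N t)\<^sup>2 - (deriv (u N) t)\<^sup>2
      = (al N)\<^sup>2 * ((((v N t)\<^sup>2 - (v1 N t)\<^sup>2) + (2 * gam N) * v N t) + (gam N)\<^sup>2)" for t
    unfolding du unfolding u_def u1_def v_def v1_def by (simp add: power2_eq_square algebra_simps)
  have i1: "(\<lambda>t. (v N t)\<^sup>2 - (v1 N t)\<^sup>2) integrable_on {-pi..pi}"
    by (intro integrable_continuous_interval continuous_intros v_cont[OF N] v1_cont[OF N])
  have i2: "(\<lambda>t. (2 * gam N) * v N t) integrable_on {-pi..pi}"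
    by (intro integrable_continuous_interval continuous_intros v_cont[OF N])
  have "integral {-pi..pi} (\<lambda>t. (u N t)\<^sup>2 - (deriv (u N) t)\<^sup>2)
      = (al N)\<^sup>2 * integral {-pi..pi} (\<lambda>t. (((v N t)\<^sup>2 - (v1 N t)\<^sup>2) + (2 * gam N) * v N t) + (gam N)\<^sup>2)"
    unfolding e by (rule integral_mult_right)
  also have "integral {-pi..pi} (\<lambda>t. (((v N t)\<^sup>2 - (v1 N t)\<^sup>2) + (2 * gam N) * v N t) + (gam N)\<^sup>2)
      = (EE N + (2 * gam N) * SS N) + 2*pi*(gam N)\<^sup>2"
    apply (subst integral_add)
      apply (rule integrable_add[OF i1 i2])
     apply (rule integrable_continuous_interval[OF continuous_on_const])
    apply (subst integral_add[OF i1 i2])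
    apply (simp add: EE_def SS_def)
    done
  also have "(EE N + (2 * gam N) * SS N) + 2*pi*(gam N)\<^sup>2 = 0"
    using gam_eq[OF gd] by (simp add: algebra_simps)
  finally show ?thesis by simp
qed

end
end

context wdata2
begin

definition K :: real where "K = integral {-pi..pi} (\<lambda>x. (w2 x)\<^sup>2)"
definition Phi :: "real \<Rightarrow> real" where
  "Phi N = 2*pi*((al N - 1)*(W+1))\<^sup>2 + 2*pi*((al N - 1)*W1 + 4*al N*rho N)\<^sup>2
     + 2*(al N - 1)\<^sup>2*K + 4*(al N)\<^sup>2*tau N + 8*pi*(al N)\<^sup>2*(c N)\<^sup>2"

context
  fixes N :: real assumes gd: "good N"
begin

lemma norm_bound: "0 \<le> W22_norm (\<lambda>t. u N t - w t) \<and> W22_norm (\<lambda>t. u N t - w t) \<le> sqrt (Phi N)"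
proof -
  have N: "0 \<le> N" by (rule gN[OF gd])
  define f where "f = (\<lambda>t. u N t - w t)"
  define f1 where "f1 = (\<lambda>t. u1 N t - w1 t)"
  define f2 where "f2 = (\<lambda>t. u2 N t - w2 t)"
  have wdf: "weak_deriv f f1" unfolding f_def f1_def by (rule weak_deriv_diff[OF u_wd[OF gd] d1])
  have wdf1: "weak_deriv f1 f2" unfolding f1_def f2_def by (rule weak_deriv_diff[OF u1_wd[OF gd] d2])
  have f1c: "continuous_on S f1" for S unfolding f1_def by (intro continuous_intros u1_cont[OF gd] w1c)
  have fc: "continuous_on S f" for S by (rule weak_deriv_cont_on[OF wdf])
  have df: "deriv f = f1" by (rule weak_deriv_deriv[OF wdf f1c])
  have ws: "weak_deriv f1 (wderiv2 f)"
    unfolding wderiv2_def df by (rule someI[of _ f2]) (rule wdf1)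
  have neg: "negligible {x\<in>{-pi..pi}. wderiv2 f x \<noteq> f2 x}"
    by (rule weak_deriv_unique[OF ws wdf1]) simp
  have ieq: "integral {-pi..pi} (\<lambda>x. (f x)\<^sup>2 + (deriv f x)\<^sup>2 + (wderiv2 f x)\<^sup>2)
      = integral {-pi..pi} (\<lambda>x. (f x)\<^sup>2 + (f1 x)\<^sup>2 + (f2 x)\<^sup>2)"
    by (rule integral_spike[OF neg]) (auto simp: df)
  define B0 where "B0 = (al N - 1)*(W+1)"
  define B1 where "B1 = (al N - 1)*W1 + 4*al N*rho N"
  have a1: "1 \<le> al N" by (rule al_props(1)[OF gd])
  have fb: "\<bar>f x\<bar> \<le> B0" for x
  proof -
    have e: "f x = (al N - 1) * w x + al N * (H N x + gam N)"
      unfolding f_def u_def by (simp add: algebra_simps)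
    have "\<bar>(al N - 1) * w x\<bar> \<le> (al N - 1) * W"
      using a1 W(2)[of x] by (simp add: abs_mult mult_left_mono)
    moreover have "\<bar>al N * (H N x + gam N)\<bar> \<le> al N * s N"
    proof -
      have "\<bar>H N x + gam N\<bar> \<le> s N"
        using H_bound[OF N, of x] unfolding s_def by (simp add: abs_le_iff) linarith
      then show ?thesis using a1 by (simp add: abs_mult)
    qed
    ultimately show ?thesis unfolding e B0_def using al_props(4)[OF gd]
      by (simp add: algebra_simps)
  qed
  have f1b: "\<bar>f1 x\<bar> \<le> B1" for x
  proof -
    have e: "f1 x = (al N - 1) * w1 x + al N * Gd N x"
      unfolding f1_def u1_def by (simp add: algebra_simps)
    have "\<bar>(al N - 1) * w1 x\<bar> \<le> (al N - 1) * W1"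
      using a1 W1(2)[of x] by (simp add: abs_mult mult_left_mono)
    moreover have "\<bar>al N * Gd N x\<bar> \<le> al N * (4 * rho N)"
      using a1 Gd_bound[OF N, of x] by (simp add: abs_mult)
    moreover have "\<bar>(al N - 1) * w1 x + al N * Gd N x\<bar> \<le> \<bar>(al N - 1) * w1 x\<bar> + \<bar>al N * Gd N x\<bar>"
      by (rule abs_triangle_ineq)
    moreover have "al N * (4 * rho N) = 4 * al N * rho N" by simp
    ultimately show ?thesis unfolding e B1_def by linarith
  qed
  define B2 where "B2 = (\<lambda>x. 2*(al N - 1)\<^sup>2*(w2 x)\<^sup>2 + 4*(al N)\<^sup>2*(q N x)\<^sup>2 + 4*(al N)\<^sup>2*(c N)\<^sup>2)"
  have f2b: "(f2 x)\<^sup>2 \<le> B2 x" for x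
  proof -
    have e: "f2 x = (al N - 1) * w2 x + al N * (q N x - c N)"
      unfolding f2_def u2_def g_def by (simp add: algebra_simps)
    have "(f2 x)\<^sup>2 \<le> 2*((al N - 1) * w2 x)\<^sup>2 + 2*(al N * (q N x - c N))\<^sup>2"
      unfolding e by (rule sq_sum_le)
    moreover have "(q N x - c N)\<^sup>2 \<le> 2*(q N x)\<^sup>2 + 2*(c N)\<^sup>2"
      using sq_sum_le[of "q N x" "- c N"] by simp
    then have "(al N * (q N x - c N))\<^sup>2 \<le> (al N)\<^sup>2 * (2*(q N x)\<^sup>2 + 2*(c N)\<^sup>2)"
      by (simp add: power_mult_distrib mult_left_mono)
    moreover have "((al N - 1) * w2 x)\<^sup>2 = (al N - 1)\<^sup>2 * (w2 x)\<^sup>2" by (simp add: power_mult_distrib)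
    moreover have "(al N)\<^sup>2 * (2*(q N x)\<^sup>2 + 2*(c N)\<^sup>2) = 2*((al N)\<^sup>2*(q N x)\<^sup>2) + 2*((al N)\<^sup>2*(c N)\<^sup>2)"
      by (simp add: algebra_simps)
    ultimately show ?thesis unfolding B2_def by (simp only: mult.assoc)
  qed
  have hB2: "(B2 has_integral (2*(al N - 1)\<^sup>2*K + 4*(al N)\<^sup>2*tau N + 8*pi*(al N)\<^sup>2*(c N)\<^sup>2)) {-pi..pi}"
  proof -
    have h1: "((\<lambda>x. 2*(al N - 1)\<^sup>2*(w2 x)\<^sup>2) has_integral (2*(al N - 1)\<^sup>2*K)) {-pi..pi}"
      unfolding K_def by (rule has_integral_mult_right) (rule integrable_integral[OF sq])
    have h2: "((\<lambda>x. 4*(al N)\<^sup>2*(q N x)\<^sup>2) has_integral (4*(al N)\<^sup>2*tau N)) {-pi..pi}"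
      unfolding tau_def by (rule has_integral_mult_right) (rule integrable_integral[OF q_sq_int[OF N]])
    have h3: "((\<lambda>x. 4*(al N)\<^sup>2*(c N)\<^sup>2) has_integral (8*pi*(al N)\<^sup>2*(c N)\<^sup>2)) {-pi..pi}"
      using has_integral_const_real[of "4*(al N)\<^sup>2*(c N)\<^sup>2" "-pi" pi] by (simp add: mult.assoc)
    show ?thesis unfolding B2_def by (rule has_integral_add[OF has_integral_add[OF h1 h2] h3])
  qed
  have f2m: "f2 \<in> borel_measurable (lebesgue_on {-pi..pi})"
  proof -
    have [measurable]: "w2 \<in> borel_measurable (lebesgue_on {-pi..pi})" by (rule w2m)
    have [measurable]: "q N \<in> borel_measurable (lebesgue_on {-pi..pi})" by (rule q_meas)
    show ?thesis unfolding f2_def u2_def g_def by measurable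
  qed
  have f2i: "(\<lambda>x. (f2 x)\<^sup>2) integrable_on {-pi..pi}"
  proof (rule measurable_bounded_by_integrable_imp_integrable)
    show "(\<lambda>x. (f2 x)\<^sup>2) \<in> borel_measurable (lebesgue_on {-pi..pi})" using f2m by measurable
    show "B2 integrable_on {-pi..pi}" using hB2 by blast
    show "norm ((f2 x)\<^sup>2) \<le> B2 x" if "x \<in> {-pi..pi}" for x using f2b[of x] by simp
  qed simp
  have hf: "((\<lambda>x. (f x)\<^sup>2 + (f1 x)\<^sup>2) has_integral integral {-pi..pi} (\<lambda>x. (f x)\<^sup>2 + (f1 x)\<^sup>2)) {-pi..pi}"
    by (intro integrable_integral integrable_continuous_interval continuous_intros fc f1c)
  have hc: "((\<lambda>x. B0\<^sup>2 + B1\<^sup>2) has_integral (2*pi*B0\<^sup>2 + 2*pi*B1\<^sup>2)) {-pi..pi}"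
    using has_integral_const_real[of "B0\<^sup>2 + B1\<^sup>2" "-pi" pi] by (simp add: algebra_simps)
  have le1: "integral {-pi..pi} (\<lambda>x. (f x)\<^sup>2 + (f1 x)\<^sup>2) \<le> 2*pi*B0\<^sup>2 + 2*pi*B1\<^sup>2"
  proof (rule has_integral_le[OF hf hc])
    fix x
    have "(f x)\<^sup>2 \<le> B0\<^sup>2" using fb[of x] abs_le_square_iff
      by (metis abs_ge_zero abs_of_nonneg order_trans)
    moreover have "(f1 x)\<^sup>2 \<le> B1\<^sup>2" using f1b[of x] abs_le_square_iff
      by (metis abs_ge_zero abs_of_nonneg order_trans)
    ultimately show "(f x)\<^sup>2 + (f1 x)\<^sup>2 \<le> B0\<^sup>2 + B1\<^sup>2" by simp
  qed
  have le2: "integral {-pi..pi} (\<lambda>x. (f2 x)\<^sup>2) \<le> 2*(al N - 1)\<^sup>2*K + 4*(al N)\<^sup>2*tau N + 8*pi*(al N)\<^sup>2*(c N)\<^sup>2"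
    by (rule has_integral_le[OF integrable_integral[OF f2i] hB2 f2b])
  have inn: "0 \<le> integral {-pi..pi} (\<lambda>x. (f x)\<^sup>2 + (f1 x)\<^sup>2 + (f2 x)\<^sup>2)"
    by (rule integral_nonneg, rule integrable_add[OF _ f2i])
       (auto intro!: integrable_continuous_interval continuous_intros fc f1c)
  have "integral {-pi..pi} (\<lambda>x. (f x)\<^sup>2 + (f1 x)\<^sup>2 + (f2 x)\<^sup>2)
      = integral {-pi..pi} (\<lambda>x. (f x)\<^sup>2 + (f1 x)\<^sup>2) + integral {-pi..pi} (\<lambda>x. (f2 x)\<^sup>2)"
    by (rule integral_add[OF _ f2i]) (intro integrable_continuous_interval continuous_intros fc f1c)
  also have "\<dots> \<le> Phi N" using le1 le2 unfolding Phi_def B0_def B1_def by simp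
  finally have "integral {-pi..pi} (\<lambda>x. (f x)\<^sup>2 + (deriv f x)\<^sup>2 + (wderiv2 f x)\<^sup>2) \<le> Phi N"
    unfolding ieq .
  moreover have "0 \<le> integral {-pi..pi} (\<lambda>x. (f x)\<^sup>2 + (deriv f x)\<^sup>2 + (wderiv2 f x)\<^sup>2)"
    unfolding ieq by (rule inn)
  ultimately show ?thesis unfolding W22_norm_def f_def[symmetric] by simp
qed

end
end

context wdata2
begin

lemma ev_nonneg: "eventually (\<lambda>N::real. 0 \<le> N) at_top"
  by (rule eventually_ge_at_top)

lemma c_lim: "(c \<longlongrightarrow> 0) at_top"
proof (rule Lim_null_comparison)
  show "eventually (\<lambda>N. norm (c N) \<le> rho N / (2*pi)) at_top"
    using ev_nonneg by eventually_elim (simp add: c_bound)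
  show "((\<lambda>N. rho N / (2*pi)) \<longlongrightarrow> 0) at_top"
    using tendsto_divide[OF rho_lim tendsto_const[of "2*pi"]] by simp
qed

lemma eb_lim: "(eb \<longlongrightarrow> 0) at_top"
proof -
  have "((\<lambda>N. 2*W*(8*pi*rho N) + (8*pi*rho N)\<^sup>2 + 2*W1*(4*rho N) + (4*rho N)\<^sup>2)
      \<longlongrightarrow> 2*W*(8*pi*0) + (8*pi*0)\<^sup>2 + 2*W1*(4*0) + (4*0)\<^sup>2) at_top"
    by (intro tendsto_intros rho_lim)
  then show ?thesis unfolding eb_def[abs_def] by simp
qed

lemma ev_good: "eventually good at_top"
proof -
  have l1: "((\<lambda>N. 8*pi*rho N) \<longlongrightarrow> 8*pi*0) at_top" by (intro tendsto_intros rho_lim)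
  have e1: "eventually (\<lambda>N. 8*pi*rho N < 1/4) at_top"
    using order_tendstoD(2)[OF l1, of "1/4"] by simp
  have e2: "eventually (\<lambda>N. eb N < 1/16) at_top"
    using order_tendstoD(2)[OF eb_lim, of "1/16"] by simp
  show ?thesis using e1 e2 ev_nonneg by eventually_elim (simp add: good_def)
qed

lemma gam_lim: "(gam \<longlongrightarrow> 0) at_top"
proof (rule Lim_null_comparison)
  show "eventually (\<lambda>N. norm (gam N) \<le> 2 * eb N) at_top"
    using ev_good by eventually_elim (simp add: gam_bound)
  show "((\<lambda>N. 2 * eb N) \<longlongrightarrow> 0) at_top"
    using tendsto_mult[OF tendsto_const[of 2] eb_lim] by simp
qed

lemma s_lim: "(s \<longlongrightarrow> 0) at_top"
proof -
  have "((\<lambda>N. 8*pi*rho N + \<bar>gam N\<bar>) \<longlongrightarrow> 8*pi*0 + \<bar>0\<bar>) at_top"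
    by (intro tendsto_intros rho_lim gam_lim)
  then show ?thesis unfolding s_def[abs_def] by simp
qed

lemma al_lim: "(al \<longlongrightarrow> 1) at_top"
proof -
  have "((\<lambda>N. 1 / (1 - s N)) \<longlongrightarrow> 1 / (1 - 0)) at_top"
    by (intro tendsto_intros s_lim) simp
  then show ?thesis unfolding al_def[abs_def] by simp
qed

lemma Phi_lim: "(Phi \<longlongrightarrow> 0) at_top"
proof -
  have "((\<lambda>N. 2*pi*((al N - 1)*(W+1))\<^sup>2 + 2*pi*((al N - 1)*W1 + 4*al N*rho N)\<^sup>2
     + 2*(al N - 1)\<^sup>2*K + 4*(al N)\<^sup>2*tau N + 8*pi*(al N)\<^sup>2*(c N)\<^sup>2)
     \<longlongrightarrow> 2*pi*((1 - 1)*(W+1))\<^sup>2 + 2*pi*((1 - 1)*W1 + 4*1*0)\<^sup>2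
     + 2*(1 - 1)\<^sup>2*K + 4*(1)\<^sup>2*0 + 8*pi*(1)\<^sup>2*(0)\<^sup>2) at_top"
    by (intro tendsto_intros al_lim rho_lim tau_lim c_lim)
  then show ?thesis unfolding Phi_def[abs_def] by simp
qed

lemma norm_lim: "((\<lambda>N. W22_norm (\<lambda>t. u N t - w t)) \<longlongrightarrow> 0) at_top"
proof (rule Lim_null_comparison)
  show "eventually (\<lambda>N. norm (W22_norm (\<lambda>t. u N t - w t)) \<le> sqrt (Phi N)) at_top"
    using ev_good by eventually_elim (use norm_bound in auto)
  show "((\<lambda>N. sqrt (Phi N)) \<longlongrightarrow> 0) at_top"
    using tendsto_real_sqrt[OF Phi_lim] by simp
qed

end

theorem lemma3:
  fixes w :: "real \<Rightarrow> real"
  assumes "W22_S1 w"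
    and "\<forall>t. w t \<ge> 1"
    and "integral {-pi..pi} (\<lambda>t. (w t)\<^sup>2 - (deriv w t)\<^sup>2) = 0"
  shows "\<exists>we :: real \<Rightarrow> real \<Rightarrow> real.
           (\<forall>\<epsilon>>0. W2inf_S1 (we \<epsilon>) \<and> (\<forall>t. we \<epsilon> t \<ge> 1) \<and>
                   integral {-pi..pi} (\<lambda>t. (we \<epsilon> t)\<^sup>2 - (deriv (we \<epsilon>) t)\<^sup>2) = 0) \<and>
           ((\<lambda>\<epsilon>. W22_norm (\<lambda>t. we \<epsilon> t - w t)) \<longlongrightarrow> 0) (at_right 0)"
proof -
  obtain w1 w2 where pw: "periodic_2pi w" and pw1: "periodic_2pi w1" and pw2: "periodic_2pi w2"
    and d1: "weak_deriv w w1" and d2: "weak_deriv w1 w2"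
    and sq: "(\<lambda>x. (w2 x)\<^sup>2) integrable_on {-pi..pi}"
    using assms(1) unfolding W22_S1_def by blast
  have dw: "deriv w = w1" by (rule weak_deriv_deriv[OF d1 weak_deriv_cont_on[OF d2]])
  interpret wdata2 w w1 w2
    by unfold_locales (use pw pw1 pw2 d1 d2 sq assms(2) assms(3) dw in auto)
  obtain N0 where N0: "\<And>N. N \<ge> N0 \<Longrightarrow> good N"
    using ev_good unfolding eventually_at_top_linorder by blast
  define we where "we = (\<lambda>\<epsilon>::real. u (max (inverse \<epsilon>) N0))"
  have gd: "good (max (inverse \<epsilon>) N0)" for \<epsilon> by (rule N0) simp
  have lim: "filterlim (\<lambda>\<epsilon>::real. max (inverse \<epsilon>) N0) at_top (at_right 0)"
    by (rule filterlim_at_top_mono[OF filterlim_inverse_at_top_right]) simp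
  have A: "\<forall>\<epsilon>>0. W2inf_S1 (we \<epsilon>) \<and> (\<forall>t. we \<epsilon> t \<ge> 1) \<and>
                   integral {-pi..pi} (\<lambda>t. (we \<epsilon> t)\<^sup>2 - (deriv (we \<epsilon>) t)\<^sup>2) = 0"
    unfolding we_def using u_W2inf[OF gd] u_ge1[OF gd] u_cons[OF gd] by blast
  have B: "((\<lambda>\<epsilon>. W22_norm (\<lambda>t. we \<epsilon> t - w t)) \<longlongrightarrow> 0) (at_right 0)"
    unfolding we_def by (rule filterlim_compose[OF norm_lim lim])
  show ?thesis using A B by blast
qed

end
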